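(* Let $\mathsf{P}$ be a program of $\mathcal{H}$. If $\mathsf{P}$ is stratified, then the perfect model of $\mathsf{Gr(P)}$ exists, and consequently the two-valued Herbrand interpretation $\mathcal{N}_\mathsf{P}$ of $\mathsf{P}$ is defined; moreover $\mathcal{N}_\mathsf{P}$ coincides with the well-founded Herbrand interpretation $\mathcal{M}_\mathsf{P}$ of $\mathsf{P}$.
   Context: Types of $\mathcal{H}$: base types $\iota,o$; predicate types $\pi::=o\mid\rho\to\pi$; argument types $\rho::=\iota\mid\pi$. Terms are built from predicate/individual variables and constants and function symbols (types $\iota^n\to\iota$) by typed application; atoms are terms of type $o$; literals are atoms, equalities $(\mathsf{E}_1\approx\mathsf{E}_2)$ of terms of type $\iota$, and negated atoms $\sim\mathsf{E}$. A clause is $\mathsf{p}\,\mathsf{V}_1\cdots\mathsf{V}_n\leftarrow\mathsf{L}_1,\dots,\mathsf{L}_m$ with $\mathsf{p}$ a predicate constant of type $\rho_1\to\cdots\to\rho_n\to o$, distinct variables $\mathsf{V}_i:\rho_i$, literals $\mathsf{L}_j$; a program is a finite set of clauses. Stratified: predicate type $\pi$ is greater than $\pi'$ if $\pi=\rho_1\to\cdots\to\rho_n\to\pi'$, $n\ge1$. $\mathsf{P}$ is stratified if its predicate constants can be partitioned into finitely many sets $S_1,\dots,S_r$ ($\mathit{stratum}(\mathsf{r})=i$ iff $\mathsf{r}\in S_i$) such that for every clause $\mathsf{H}\leftarrow\mathsf{A}_1,\dots,\mathsf{A}_m,\sim\mathsf{B}_1,\dots,\sim\mathsf{B}_n$ with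 head predicate constant $\mathsf{p}$: if $\mathsf{A}_i$ starts with predicate constant $\mathsf{q}$ then $\mathit{stratum}(\mathsf{q})\le\mathit{stratum}(\mathsf{p})$; if $\mathsf{A}_i$ starts with predicate variable $\mathsf{Q}$ then $\mathit{stratum}(\mathsf{q})\le\mathit{stratum}(\mathsf{p})$ for all predicate constants $\mathsf{q}$ of $\mathsf{P}$ of type greater than or equal to that of $\mathsf{Q}$; if $\mathsf{B}_i$ starts with predicate constant $\mathsf{q}$ then $\mathit{stratum}(\mathsf{q})<\mathit{stratum}(\mathsf{p})$; if $\mathsf{B}_i$ starts with predicate variable $\mathsf{Q}$ then $\mathit{stratum}(\mathsf{q})<\mathit{stratum}(\mathsf{p})$ for all predicate constants $\mathsf{q}$ of $\mathsf{P}$ of type greater than or equal to that of $\mathsf{Q}$. Semantics: $U_{\mathsf{P},\rho}$ is the set of ground terms of type $\rho$ built from symbols of $\mathsf{P}$; $\mathsf{Gr(P)}$ is the set of all clauses obtained from clauses of $\mathsf{P}$ by substituting for each variable an element of $U_{\mathsf{P},\rho}$ of its type, regarded as a (possibly infinite) propositional program over the ground atoms $U_{\mathsf{P},o}$ (ground equalities being constants true/false according to syntactic identity). The perfect model of $\mathsf{Gr(P)}$ is the standard (two-valued) perfect model of a propositional program (in the sense of Przymusinski), when it exists; the well-founded model is the standard three-valued well-founded model. $\mathcal{N}_\mathsf{P}$ (resp. $\mathcal{M}_\mathsf{P}$) is the Herbrand interpretation of $\mathsf{P}$ — symbols interpreted by themselves, application syntactic — whose valuation assigns to every ground atom its value in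 the perfect model (resp. well-founded model) of $\mathsf{Gr(P)}$; Herbrand interpretations are identified when their valuation functions coincide. *)

theory Defs
  imports Main "HOL-Library.Product_Order"
begin

datatype ty = Iota | Omicron | Arr ty ty

fun is_pred_ty :: "ty \<Rightarrow> bool" where
  "is_pred_ty Omicron = True"
| "is_pred_ty (Arr r p) = ((r = Iota \<or> is_pred_ty r) \<and> is_pred_ty p)"
| "is_pred_ty Iota = False"

definition is_arg_ty :: "ty \<Rightarrow> bool" where
  "is_arg_ty r \<longleftrightarrow> r = Iota \<or> is_pred_ty r"

fun iota_chain :: "ty \<Rightarrow> bool" where
  "iota_chain Iota = True"
| "iota_chain (Arr Iota r) = iota_chain r"
| "iota_chain _ = False"

definition is_fun_ty :: "ty \<Rightarrow> bool" where
  "is_fun_ty t \<longleftrightarrow> iota_chain t \<and> t \<noteq> Iota"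

fun arrows :: "ty list \<Rightarrow> ty \<Rightarrow> ty" where
  "arrows [] t = t"
| "arrows (r # rs) t = Arr r (arrows rs t)"

text \<open>pi is greater than or equal to pi': pi' is obtained from pi by stripping
  zero or more argument types.\<close>
fun ty_ge :: "ty \<Rightarrow> ty \<Rightarrow> bool" where
  "ty_ge (Arr r p) t = (Arr r p = t \<or> ty_ge p t)"
| "ty_ge s t = (s = t)"

type_synonym sym = "string \<times> ty"

datatype trm = Var sym | Con sym | App trm trm

fun ty_of :: "trm \<Rightarrow> ty option" where
  "ty_of (Var v) = Some (snd v)"
| "ty_of (Con c) = Some (snd c)"
| "ty_of (App s t) = (case ty_of s of Some (Arr a b) \<Rightarrow> (if ty_of t = Some a then Some b else None) | _ \<Rightarrow> None)"

fun vars_of :: "trm \<Rightarrow> sym set" where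
  "vars_of (Var v) = {v}"
| "vars_of (Con c) = {}"
| "vars_of (App s t) = vars_of s \<union> vars_of t"

fun consts_of :: "trm \<Rightarrow> sym set" where
  "consts_of (Var v) = {}"
| "consts_of (Con c) = {c}"
| "consts_of (App s t) = consts_of s \<union> consts_of t"

definition wf_trm :: "trm \<Rightarrow> bool" where
  "wf_trm t \<longleftrightarrow> ty_of t \<noteq> None \<and> (\<forall>v\<in>vars_of t. is_arg_ty (snd v))
     \<and> (\<forall>c\<in>consts_of t. snd c = Iota \<or> is_fun_ty (snd c) \<or> is_pred_ty (snd c))"

datatype lit = Pos trm | Eq trm trm | Neg trm

fun wf_lit :: "lit \<Rightarrow> bool" where
  "wf_lit (Pos a) \<longleftrightarrow> wf_trm a \<and> ty_of a = Some Omicron"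
| "wf_lit (Neg a) \<longleftrightarrow> wf_trm a \<and> ty_of a = Some Omicron"
| "wf_lit (Eq s t) \<longleftrightarrow> wf_trm s \<and> wf_trm t \<and> ty_of s = Some Iota \<and> ty_of t = Some Iota"

fun lit_vars :: "lit \<Rightarrow> sym set" where
  "lit_vars (Pos a) = vars_of a"
| "lit_vars (Neg a) = vars_of a"
| "lit_vars (Eq s t) = vars_of s \<union> vars_of t"

fun lit_consts :: "lit \<Rightarrow> sym set" where
  "lit_consts (Pos a) = consts_of a"
| "lit_consts (Neg a) = consts_of a"
| "lit_consts (Eq s t) = consts_of s \<union> consts_of t"

text \<open>A clause  p V1 ... Vn <- L1, ..., Lm.\<close>
datatype clause = Clause (hd_pred: sym) (hd_args: "sym list") (body: "lit list")

definition head_atom :: "clause \<Rightarrow> trm" where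
  "head_atom c = foldl App (Con (hd_pred c)) (map Var (hd_args c))"

definition wf_clause :: "clause \<Rightarrow> bool" where
  "wf_clause c \<longleftrightarrow>
     is_pred_ty (snd (hd_pred c)) \<and> snd (hd_pred c) = arrows (map snd (hd_args c)) Omicron
     \<and> distinct (hd_args c) \<and> (\<forall>v\<in>set (hd_args c). is_arg_ty (snd v))
     \<and> (\<forall>l\<in>set (body c). wf_lit l)"

definition clause_vars :: "clause \<Rightarrow> sym set" where
  "clause_vars c = set (hd_args c) \<union> (\<Union>l\<in>set (body c). lit_vars l)"

definition is_program :: "clause set \<Rightarrow> bool" where
  "is_program P \<longleftrightarrow> finite P \<and> (\<forall>c\<in>P. wf_clause c)"

definition consts_prog :: "clause set \<Rightarrow> sym set" where
  "consts_prog P = (\<Union>c\<in>P. {hd_pred c} \<union> (\<Union>l\<in>set (body c). lit_consts l))"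

definition pred_consts :: "clause set \<Rightarrow> sym set" where
  "pred_consts P = {c \<in> consts_prog P. is_pred_ty (snd c)}"

fun head_sym :: "trm \<Rightarrow> trm" where
  "head_sym (App s t) = head_sym s"
| "head_sym t = t"

definition stratified :: "clause set \<Rightarrow> bool" where
  "stratified P \<longleftrightarrow> (\<exists>st :: sym \<Rightarrow> nat. \<forall>c\<in>P. \<forall>l\<in>set (body c).
     (case l of
        Pos a \<Rightarrow> (case head_sym a of
                    Con q \<Rightarrow> st q \<le> st (hd_pred c)
                  | Var Q \<Rightarrow> (\<forall>q\<in>pred_consts P. ty_ge (snd q) (snd Q) \<longrightarrow> st q \<le> st (hd_pred c))
                  | _ \<Rightarrow> True)
      | Neg a \<Rightarrow> (case head_sym a of
                    Con q \<Rightarrow> st q < st (hd_pred c)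
                  | Var Q \<Rightarrow> (\<forall>q\<in>pred_consts P. ty_ge (snd q) (snd Q) \<longrightarrow> st q < st (hd_pred c))
                  | _ \<Rightarrow> True)
      | Eq _ _ \<Rightarrow> True))"

definition U :: "clause set \<Rightarrow> ty \<Rightarrow> trm set" where
  "U P r = {t. vars_of t = {} \<and> ty_of t = Some r \<and> consts_of t \<subseteq> consts_prog P}"

fun subst :: "(sym \<Rightarrow> trm) \<Rightarrow> trm \<Rightarrow> trm" where
  "subst \<theta> (Var v) = \<theta> v"
| "subst \<theta> (Con c) = Con c"
| "subst \<theta> (App s t) = App (subst \<theta> s) (subst \<theta> t)"

fun subst_lit :: "(sym \<Rightarrow> trm) \<Rightarrow> lit \<Rightarrow> lit" where
  "subst_lit \<theta> (Pos a) = Pos (subst \<theta> a)"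
| "subst_lit \<theta> (Neg a) = Neg (subst \<theta> a)"
| "subst_lit \<theta> (Eq s t) = Eq (subst \<theta> s) (subst \<theta> t)"

text \<open>Gr(P): ground clauses (head atom, ground body literals); ground equalities are
  evaluated by syntactic identity below.\<close>
definition Gr :: "clause set \<Rightarrow> (trm \<times> lit list) set" where
  "Gr P = {(subst \<theta> (head_atom c), map (subst_lit \<theta>) (body c)) | c \<theta>.
             c \<in> P \<and> (\<forall>v\<in>clause_vars c. \<theta> v \<in> U P (snd v))}"

definition base :: "clause set \<Rightarrow> trm set" where
  "base P = U P Omicron"

section \<open>Perfect model (Przymusinski)\<close>

fun lit_true2 :: "trm set \<Rightarrow> lit \<Rightarrow> bool" where
  "lit_true2 M (Pos a) \<longleftrightarrow> a \<in> M"
| "lit_true2 M (Neg a) \<longleftrightarrow> a \<notin> M"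
| "lit_true2 M (Eq s t) \<longleftrightarrow> s = t"

definition is_model :: "clause set \<Rightarrow> trm set \<Rightarrow> bool" where
  "is_model P M \<longleftrightarrow> M \<subseteq> base P \<and>
     (\<forall>(h, B)\<in>Gr P. (\<forall>l\<in>set B. lit_true2 M l) \<longrightarrow> h \<in> M)"

text \<open>Dependency edges of the ground program: (head, body atom).\<close>
definition dep :: "clause set \<Rightarrow> (trm \<times> trm) set" where
  "dep P = {(h, a) | h B a. (h, B) \<in> Gr P \<and> (Pos a \<in> set B \<or> Neg a \<in> set B)}"

definition neg_dep :: "clause set \<Rightarrow> (trm \<times> trm) set" where
  "neg_dep P = {(h, a) | h B a. (h, B) \<in> Gr P \<and> Neg a \<in> set B}"

text \<open>(a, b) \<in> prio P  means  a < b, i.e. b has higher priority than a: there is a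
  dependency path from a to b through at least one negative edge.\<close>
definition prio :: "clause set \<Rightarrow> (trm \<times> trm) set" where
  "prio P = (dep P)\<^sup>* O neg_dep P O (dep P)\<^sup>*"

definition preferable :: "clause set \<Rightarrow> trm set \<Rightarrow> trm set \<Rightarrow> bool" where
  "preferable P N M \<longleftrightarrow> N \<noteq> M \<and> (\<forall>a\<in>N - M. \<exists>b\<in>M - N. (a, b) \<in> prio P)"

definition is_perfect :: "clause set \<Rightarrow> trm set \<Rightarrow> bool" where
  "is_perfect P M \<longleftrightarrow> is_model P M \<and> \<not> (\<exists>N. is_model P N \<and> preferable P N M)"

definition perfect_model :: "clause set \<Rightarrow> trm set" where
  "perfect_model P = (THE M. is_perfect P M)"

section \<open>Well-founded model (Van Gelder, Ross, Schlipf)\<close>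

text \<open>Partial interpretations are pairs (T, F) of sets of ground atoms.\<close>
fun lit_true3 :: "trm set \<times> trm set \<Rightarrow> lit \<Rightarrow> bool" where
  "lit_true3 I (Pos a) \<longleftrightarrow> a \<in> fst I"
| "lit_true3 I (Neg a) \<longleftrightarrow> a \<in> snd I"
| "lit_true3 I (Eq s t) \<longleftrightarrow> s = t"

fun lit_false3 :: "trm set \<times> trm set \<Rightarrow> lit \<Rightarrow> bool" where
  "lit_false3 I (Pos a) \<longleftrightarrow> a \<in> snd I"
| "lit_false3 I (Neg a) \<longleftrightarrow> a \<in> fst I"
| "lit_false3 I (Eq s t) \<longleftrightarrow> s \<noteq> t"

definition unfounded :: "clause set \<Rightarrow> trm set \<times> trm set \<Rightarrow> trm set \<Rightarrow> bool" where
  "unfounded P I X \<longleftrightarrow> X \<subseteq> base P \<and>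
     (\<forall>a\<in>X. \<forall>(h, B)\<in>Gr P. h = a \<longrightarrow>
        (\<exists>l\<in>set B. lit_false3 I l \<or> (\<exists>b. l = Pos b \<and> b \<in> X)))"

definition greatest_unfounded :: "clause set \<Rightarrow> trm set \<times> trm set \<Rightarrow> trm set" where
  "greatest_unfounded P I = \<Union>{X. unfounded P I X}"

definition T_op :: "clause set \<Rightarrow> trm set \<times> trm set \<Rightarrow> trm set" where
  "T_op P I = {h. \<exists>B. (h, B) \<in> Gr P \<and> (\<forall>l\<in>set B. lit_true3 I l)}"

definition W_op :: "clause set \<Rightarrow> trm set \<times> trm set \<Rightarrow> trm set \<times> trm set" where
  "W_op P I = (T_op P I, greatest_unfounded P I)"

definition wf_model :: "clause set \<Rightarrow> trm set \<times> trm set" where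
  "wf_model P = lfp (W_op P)"

section \<open>Herbrand interpretations N_P and M_P (their valuations on ground atoms)\<close>

datatype tv = Fls | Undef | Tru

definition N_val :: "clause set \<Rightarrow> trm \<Rightarrow> tv" where
  "N_val P a = (if a \<in> perfect_model P then Tru else Fls)"

definition M_val :: "clause set \<Rightarrow> trm \<Rightarrow> tv" where
  "M_val P a = (if a \<in> fst (wf_model P) then Tru
                else if a \<in> snd (wf_model P) then Fls else Undef)"

end

theory Submission
  imports Defs
begin

lemma ty_ge_refl: "ty_ge t t" by (cases t) auto

lemma ty_ge_Arr: "ty_ge x (Arr a r) \<Longrightarrow> ty_ge x r"
  by (induction x) (auto simp: ty_ge_refl)

lemma head_sym_ty:
  "ty_of t = Some r \<Longrightarrow> (case head_sym t of Con q \<Rightarrow> ty_ge (snd q) r | Var v \<Rightarrow> ty_ge (snd v) r | _ \<Rightarrow> True)"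
proof (induction t arbitrary: r)
  case (Var v) then show ?case by (auto simp: ty_ge_refl)
next
  case (Con c) then show ?case by (auto simp: ty_ge_refl)
next
  case (App s u)
  from App.prems obtain a where "ty_of s = Some (Arr a r)"
    by (auto split: option.splits ty.splits if_splits)
  with App.IH(1) show ?case by (auto split: trm.splits intro: ty_ge_Arr)
qed

lemma head_sym_subst: "head_sym (subst \<theta> t) = (case head_sym t of Var v \<Rightarrow> head_sym (\<theta> v) | x \<Rightarrow> x)"
  by (induction t) (auto split: trm.splits)

lemma head_sym_Var: "head_sym t = Var v \<Longrightarrow> v \<in> vars_of t" by (induction t) auto
lemma head_sym_Con: "head_sym t = Con c \<Longrightarrow> c \<in> consts_of t" by (induction t) auto
lemma head_sym_App: "head_sym t \<noteq> App x y" by (induction t) auto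
lemma head_sym_foldl: "head_sym (foldl App t xs) = head_sym t" by (induction xs arbitrary: t) auto
lemma ty_foldl: "ty_of t = Some (arrows (map snd vs) r) \<Longrightarrow> ty_of (foldl App t (map Var vs)) = Some r"
  by (induction vs arbitrary: t) auto
lemma vars_foldl: "vars_of (foldl App t (map Var vs)) = vars_of t \<union> set vs"
  by (induction vs arbitrary: t) auto
lemma consts_foldl: "consts_of (foldl App t (map Var vs)) = consts_of t"
  by (induction vs arbitrary: t) auto

lemma subst_ground:
  assumes "vars_of t \<subseteq> V" "\<forall>v\<in>V. \<theta> v \<in> U P (snd v)"
  shows "vars_of (subst \<theta> t) = {} \<and> ty_of (subst \<theta> t) = ty_of t \<and> consts_of (subst \<theta> t) \<subseteq> consts_of t \<union> consts_prog P"
  using assms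
proof (induction t)
  case (App t1 t2)
  then have e1: "ty_of (subst \<theta> t1) = ty_of t1" and e2: "ty_of (subst \<theta> t2) = ty_of t2" by auto
  have "ty_of (subst \<theta> (App t1 t2)) = ty_of (App t1 t2)"
    by (simp only: subst.simps ty_of.simps e1 e2)
  with App show ?case by auto
qed (auto simp: U_def)

lemma iota_chain_not_o: "iota_chain t \<Longrightarrow> \<not> ty_ge t Omicron"
  by (induction t rule: iota_chain.induct) auto

lemma wf_consts:
  assumes "is_program P" "c \<in> consts_prog P"
  shows "snd c = Iota \<or> is_fun_ty (snd c) \<or> is_pred_ty (snd c)"
proof -
  from assms(2) obtain cl where cl: "cl \<in> P" and "c = hd_pred cl \<or> (\<exists>l\<in>set (body cl). c \<in> lit_consts l)"
    unfolding consts_prog_def by blast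
  moreover have "wf_clause cl" using assms(1) cl by (auto simp: is_program_def)
  ultimately show ?thesis
  proof (elim disjE bexE)
    fix l assume "l \<in> set (body cl)" "c \<in> lit_consts l" "wf_clause cl"
    then have "wf_lit l" by (auto simp: wf_clause_def)
    with \<open>c \<in> lit_consts l\<close> show ?thesis by (cases l) (auto simp: wf_trm_def)
  qed (auto simp: wf_clause_def)
qed

fun leval :: "trm set \<Rightarrow> trm set \<Rightarrow> lit \<Rightarrow> bool" where
  "leval A X (Pos a) = (a \<in> A \<or> a \<in> X)"
| "leval A X (Neg a) = (a \<notin> A)"
| "leval A X (Eq s t) = (s = t)"

lemma leval_mono: "X \<subseteq> Y \<Longrightarrow> leval A X l \<Longrightarrow> leval A Y l" by (cases l) auto

lemma Gr_E:
  assumes "(h, B) \<in> Gr P"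
  obtains c \<theta> where "c \<in> P" "\<forall>v\<in>clause_vars c. \<theta> v \<in> U P (snd v)"
    "h = subst \<theta> (head_atom c)" "B = map (subst_lit \<theta>) (body c)"
  using assms unfolding Gr_def by blast

locale strat =
  fixes P :: "clause set" and st :: "sym \<Rightarrow> nat"
  assumes prog: "is_program P"
  and sc: "\<forall>c\<in>P. \<forall>l\<in>set (body c).
     (case l of
        Pos a \<Rightarrow> (case head_sym a of
                    Con q \<Rightarrow> st q \<le> st (hd_pred c)
                  | Var Q \<Rightarrow> (\<forall>q\<in>pred_consts P. ty_ge (snd q) (snd Q) \<longrightarrow> st q \<le> st (hd_pred c))
                  | _ \<Rightarrow> True)
      | Neg a \<Rightarrow> (case head_sym a of
                    Con q \<Rightarrow> st q < st (hd_pred c)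
                  | Var Q \<Rightarrow> (\<forall>q\<in>pred_consts P. ty_ge (snd q) (snd Q) \<longrightarrow> st q < st (hd_pred c))
                  | _ \<Rightarrow> True)
      | Eq _ _ \<Rightarrow> True)"
begin

definition lvl :: "trm \<Rightarrow> nat" where "lvl t = (case head_sym t of Con c \<Rightarrow> st c | _ \<Rightarrow> 0)"

lemma atom_inst:
  assumes c: "c \<in> P" and th: "\<forall>v\<in>clause_vars c. \<theta> v \<in> U P (snd v)"
  and l: "l \<in> set (body c)" and la: "l = Pos a \<or> l = Neg a"
  shows "subst \<theta> a \<in> base P \<and> (\<exists>q. head_sym (subst \<theta> a) = Con q \<and> q \<in> pred_consts P \<and>
      (head_sym a = Con q \<or> (\<exists>Q. head_sym a = Var Q \<and> ty_ge (snd q) (snd Q))))"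
proof -
  have wfc: "wf_clause c" using prog c by (auto simp: is_program_def)
  then have "wf_lit l" using l by (auto simp: wf_clause_def)
  then have ta: "ty_of a = Some Omicron" using la by auto
  have va: "vars_of a \<subseteq> clause_vars c" using l la by (auto simp: clause_vars_def)
  have "consts_of a \<subseteq> lit_consts l" using la by auto
  then have ca: "consts_of a \<subseteq> consts_prog P" using l c unfolding consts_prog_def by blast
  define b where "b = subst \<theta> a"
  have g: "vars_of b = {}" "ty_of b = Some Omicron" "consts_of b \<subseteq> consts_prog P"
    using subst_ground[OF va th] ta ca unfolding b_def by auto
  then have bb: "b \<in> base P" by (auto simp: base_def U_def)
  obtain q where hq: "head_sym b = Con q"
    using g(1) head_sym_Var head_sym_App by (cases "head_sym b") fastforce+
  have qc: "q \<in> consts_prog P" using head_sym_Con[OF hq] g(3) by auto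
  have "ty_ge (snd q) Omicron" using head_sym_ty[OF g(2)] hq by simp
  then have "is_pred_ty (snd q)" using wf_consts[OF prog qc] iota_chain_not_o
    by (auto simp: is_fun_ty_def)
  then have qp: "q \<in> pred_consts P" using qc by (auto simp: pred_consts_def)
  have "head_sym a = Con q \<or> (\<exists>Q. head_sym a = Var Q \<and> ty_ge (snd q) (snd Q))"
  proof (cases "head_sym a")
    case (Var Q)
    then have "Q \<in> clause_vars c" using head_sym_Var[OF Var] va by blast
    then have "ty_of (\<theta> Q) = Some (snd Q)" using th by (auto simp: U_def)
    moreover have "head_sym (\<theta> Q) = Con q" using hq Var head_sym_subst[of \<theta> a] b_def by simp
    ultimately show ?thesis using head_sym_ty[of "\<theta> Q"] Var by auto
  next
    case (Con x) then show ?thesis using hq head_sym_subst[of \<theta> a] b_def by simp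
  next
    case (App x y) then show ?thesis using head_sym_App by blast
  qed
  then show ?thesis using bb hq qp b_def by blast
qed

lemma Gr_props:
  assumes "(h, B) \<in> Gr P"
  shows "h \<in> base P"
    and "Pos b \<in> set B \<Longrightarrow> b \<in> base P \<and> lvl b \<le> lvl h"
    and "Neg b \<in> set B \<Longrightarrow> b \<in> base P \<and> lvl b < lvl h"
proof -
  obtain c \<theta> where c: "c \<in> P" and th: "\<forall>v\<in>clause_vars c. \<theta> v \<in> U P (snd v)"
    and h: "h = subst \<theta> (head_atom c)" and B: "B = map (subst_lit \<theta>) (body c)"
    using assms by (rule Gr_E)
  have wfc: "wf_clause c" using prog c by (auto simp: is_program_def)
  have lh: "lvl h = st (hd_pred c)"
    using h head_sym_subst[of \<theta> "head_atom c"] by (simp add: head_atom_def head_sym_foldl lvl_def)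
  have "ty_of (head_atom c) = Some Omicron" using wfc ty_foldl[of "Con (hd_pred c)" "hd_args c" Omicron]
    by (simp add: head_atom_def wf_clause_def)
  moreover have "vars_of (head_atom c) \<subseteq> clause_vars c"
    by (simp add: head_atom_def vars_foldl clause_vars_def)
  moreover have "consts_of (head_atom c) \<subseteq> consts_prog P"
    using c by (auto simp: head_atom_def consts_foldl consts_prog_def)
  ultimately show "h \<in> base P" using subst_ground[OF _ th, of "head_atom c"] h
    by (auto simp: base_def U_def)
  show "Pos b \<in> set B \<Longrightarrow> b \<in> base P \<and> lvl b \<le> lvl h"
  proof -
    assume "Pos b \<in> set B"
    then obtain l where l: "l \<in> set (body c)" "subst_lit \<theta> l = Pos b" using B by auto
    from l(2) obtain a where a: "l = Pos a" "b = subst \<theta> a" by (cases l) auto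
    from atom_inst[OF c th l(1)] a obtain q where
      "b \<in> base P" "head_sym b = Con q" "q \<in> pred_consts P"
      "head_sym a = Con q \<or> (\<exists>Q. head_sym a = Var Q \<and> ty_ge (snd q) (snd Q))" by blast
    moreover have "case head_sym a of Con q \<Rightarrow> st q \<le> st (hd_pred c)
                  | Var Q \<Rightarrow> (\<forall>q\<in>pred_consts P. ty_ge (snd q) (snd Q) \<longrightarrow> st q \<le> st (hd_pred c))
                  | _ \<Rightarrow> True"
      using sc c l a by fastforce
    ultimately show ?thesis using lh by (auto simp: lvl_def)
  qed
  show "Neg b \<in> set B \<Longrightarrow> b \<in> base P \<and> lvl b < lvl h"
  proof -
    assume "Neg b \<in> set B"
    then obtain l where l: "l \<in> set (body c)" "subst_lit \<theta> l = Neg b" using B by auto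
    from l(2) obtain a where a: "l = Neg a" "b = subst \<theta> a" by (cases l) auto
    from atom_inst[OF c th l(1)] a obtain q where
      "b \<in> base P" "head_sym b = Con q" "q \<in> pred_consts P"
      "head_sym a = Con q \<or> (\<exists>Q. head_sym a = Var Q \<and> ty_ge (snd q) (snd Q))" by blast
    moreover have "case head_sym a of Con q \<Rightarrow> st q < st (hd_pred c)
                  | Var Q \<Rightarrow> (\<forall>q\<in>pred_consts P. ty_ge (snd q) (snd Q) \<longrightarrow> st q < st (hd_pred c))
                  | _ \<Rightarrow> True"
      using sc c l a by fastforce
    ultimately show ?thesis using lh by (auto simp: lvl_def)
  qed
qed

definition F :: "trm set \<Rightarrow> nat \<Rightarrow> trm set \<Rightarrow> trm set" where
  "F A k X = {h. lvl h = k \<and> (\<exists>B. (h, B) \<in> Gr P \<and> (\<forall>l\<in>set B. leval A X l))}"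

lemma mono_F: "mono (F A k)"
  unfolding mono_def F_def using leval_mono by blast

primrec Cb :: "nat \<Rightarrow> trm set" where
  "Cb 0 = {}"
| "Cb (Suc k) = Cb k \<union> lfp (F (Cb k) k)"

definition Lev :: "nat \<Rightarrow> trm set" where "Lev k = lfp (F (Cb k) k)"

definition Sm :: "trm set" where "Sm = (\<Union>k. Lev k)"

lemma Lev_fix: "Lev k = F (Cb k) k (Lev k)"
  unfolding Lev_def by (rule lfp_unfold[OF mono_F])

lemma Lev_level: "a \<in> Lev k \<Longrightarrow> lvl a = k"
  using Lev_fix[of k] by (auto simp: F_def)

lemma Cb_eq: "Cb k = (\<Union>j<k. Lev j)"
  by (induction k) (auto simp: Lev_def lessThan_Suc)

lemma Cb_S: "Cb k = {a \<in> Sm. lvl a < k}"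
  unfolding Cb_eq Sm_def using Lev_level by fastforce

lemma Lev_S: "Lev k = {a \<in> Sm. lvl a = k}"
  unfolding Sm_def using Lev_level by fastforce

lemma Sm_base: "Sm \<subseteq> base P"
proof
  fix a assume "a \<in> Sm"
  then obtain k where "a \<in> Lev k" by (auto simp: Sm_def)
  then have "a \<in> F (Cb k) k (Lev k)" using Lev_fix by simp
  then show "a \<in> base P" using Gr_props(1) by (auto simp: F_def)
qed

lemma Sm_model: "is_model P Sm"
  unfolding is_model_def
proof (intro conjI Sm_base ballI impI, clarify)
  fix h B assume hB: "(h, B) \<in> Gr P" and tr: "\<forall>l\<in>set B. lit_true2 Sm l"
  define k where "k = lvl h"
  have "\<forall>l\<in>set B. leval (Cb k) (Lev k) l"
  proof
    fix l assume l: "l \<in> set B"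
    show "leval (Cb k) (Lev k) l"
    proof (cases l)
      case (Pos b)
      then have "b \<in> Sm" "lvl b \<le> k" using tr l Gr_props(2)[OF hB] k_def by auto
      then show ?thesis using Pos Cb_S Lev_S by auto
    next
      case (Neg b)
      then show ?thesis using tr l Cb_S by auto
    next
      case (Eq s t) then show ?thesis using tr l by auto
    qed
  qed
  then have "h \<in> F (Cb k) k (Lev k)" using hB k_def by (auto simp: F_def)
  then show "h \<in> Sm" using Lev_fix Sm_def by auto
qed

lemma Sm_induct[consumes 1, case_names step]:
  assumes a: "a \<in> Sm"
  and H: "\<And>a B. (a, B) \<in> Gr P \<Longrightarrow> \<forall>l\<in>set B. lit_true2 Sm l \<Longrightarrow> (\<And>b. Pos b \<in> set B \<Longrightarrow> Q b) \<Longrightarrow> Q a"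
  shows "Q a"
proof -
  have "\<forall>a\<in>Lev k. Q a" for k
  proof (induction k rule: less_induct)
    case (less k)
    have cb: "\<forall>a\<in>Cb k. Q a" using less Cb_eq by auto
    show ?case
    proof
      fix a assume "a \<in> Lev k"
      then have "a \<in> lfp (F (Cb k) k)" by (simp add: Lev_def)
      then show "Q a"
      proof (rule lfp_induct_set[OF _ mono_F])
        fix x assume "x \<in> F (Cb k) k (lfp (F (Cb k) k) \<inter> {x. Q x})"
        then obtain B where x: "lvl x = k" "(x, B) \<in> Gr P"
          and ev: "\<forall>l\<in>set B. leval (Cb k) (Lev k \<inter> {x. Q x}) l"
          by (auto simp: F_def Lev_def)
        show "Q x"
        proof (rule H[OF x(2)])
          show "\<forall>l\<in>set B. lit_true2 Sm l"
          proof
            fix l assume l: "l \<in> set B"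
            show "lit_true2 Sm l"
            proof (cases l)
              case (Pos b) then show ?thesis using ev l Cb_S Lev_S by auto
            next
              case (Neg b)
              then have "b \<notin> Cb k" "lvl b < k" using ev l Gr_props(3)[OF x(2)] x(1) by auto
              then show ?thesis using Neg Cb_S by auto
            next
              case (Eq s t) then show ?thesis using ev l by auto
            qed
          qed
        next
          fix b assume "Pos b \<in> set B"
          then have "leval (Cb k) (Lev k \<inter> {x. Q x}) (Pos b)" using ev by blast
          then show "Q b" using cb by auto
        qed
      qed
    qed
  qed
  then show ?thesis using a Sm_def by auto
qed

lemma dep_lvl: "(h, a) \<in> dep P \<Longrightarrow> lvl a \<le> lvl h"
  unfolding dep_def using Gr_props by fastforce

lemma neg_lvl: "(h, a) \<in> neg_dep P \<Longrightarrow> lvl a < lvl h"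
  unfolding neg_dep_def using Gr_props by fastforce

lemma deps_lvl: "(x, y) \<in> (dep P)\<^sup>* \<Longrightarrow> lvl y \<le> lvl x"
  by (induction rule: rtrancl_induct) (auto dest: dep_lvl)

lemma prio_lvl: "(a, b) \<in> prio P \<Longrightarrow> lvl b < lvl a"
  unfolding prio_def by (fastforce dest: deps_lvl neg_lvl)

lemma dep_prio: "(a, b) \<in> dep P \<Longrightarrow> (b, c) \<in> prio P \<Longrightarrow> (a, c) \<in> prio P"
  unfolding prio_def by (meson converse_rtrancl_into_rtrancl relcomp.simps)

lemma neg_prio: "(a, b) \<in> neg_dep P \<Longrightarrow> (a, b) \<in> prio P"
  unfolding prio_def by blast

lemma Dom:
  assumes M: "is_model P M" and a: "a \<in> Sm"
  shows "a \<in> M \<or> (\<exists>b\<in>M - Sm. (a, b) \<in> prio P)"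
  using a
proof (induction rule: Sm_induct)
  case (step a B)
  show ?case
  proof (cases "\<forall>l\<in>set B. lit_true2 M l")
    case True then show ?thesis using M step(1) by (auto simp: is_model_def)
  next
    case False
    then obtain l where l: "l \<in> set B" "\<not> lit_true2 M l" by blast
    show ?thesis
    proof (cases l)
      case (Pos b)
      then have "b \<notin> M" "(a, b) \<in> dep P" using l step(1) by (auto simp: dep_def)
      moreover have "b \<in> Sm" using step(2) l Pos by auto
      ultimately show ?thesis using step(3)[of b] Pos l dep_prio by blast
    next
      case (Neg b)
      then have "b \<in> M" "b \<notin> Sm" "(a, b) \<in> neg_dep P" using l step(1,2) by (auto simp: neg_dep_def)
      then show ?thesis using neg_prio by blast
    next
      case (Eq s t) then show ?thesis using l step(2) by auto
    qed
  qed
qed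

lemma no_pref:
  assumes N: "is_model P N" shows "\<not> preferable P N Sm"
proof
  assume pr: "preferable P N Sm"
  define D where "D = (N - Sm) \<union> (Sm - N)"
  have step: "\<exists>e\<in>D. lvl e < lvl d" if "d \<in> D" for d
  proof (cases "d \<in> N - Sm")
    case True
    then obtain b where "b \<in> Sm - N" "(d, b) \<in> prio P" using pr by (auto simp: preferable_def)
    then show ?thesis using prio_lvl D_def by blast
  next
    case False
    then have "d \<in> Sm - N" using that D_def by auto
    then obtain b where "b \<in> N - Sm" "(d, b) \<in> prio P" using Dom[OF N] by blast
    then show ?thesis using prio_lvl D_def by blast
  qed
  have "\<forall>d\<in>D. lvl d \<noteq> k" for k
  proof (induction k rule: less_induct)
    case (less k) then show ?case using step by fastforce
  qed
  moreover have "D \<noteq> {}" using pr by (auto simp: preferable_def D_def)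
  ultimately show False by blast
qed

lemma Sm_perfect: "is_perfect P Sm"
  using Sm_model no_pref by (auto simp: is_perfect_def)

lemma perfect_unique: "is_perfect P M \<Longrightarrow> M = Sm"
proof (rule ccontr)
  assume p: "is_perfect P M" and ne: "M \<noteq> Sm"
  have "preferable P Sm M"
    unfolding preferable_def using ne Dom[of M] p by (auto simp: is_perfect_def)
  then show False using p Sm_model by (auto simp: is_perfect_def)
qed

lemma true3_mono: "fst I \<subseteq> fst J \<Longrightarrow> snd I \<subseteq> snd J \<Longrightarrow> lit_true3 I l \<Longrightarrow> lit_true3 J l"
  by (cases l) auto

lemma false3_mono: "fst I \<subseteq> fst J \<Longrightarrow> snd I \<subseteq> snd J \<Longrightarrow> lit_false3 I l \<Longrightarrow> lit_false3 J l"
  by (cases l) auto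

lemma mono_W: "mono (W_op P)"
proof (rule monoI)
  fix I J :: "trm set \<times> trm set" assume "I \<le> J"
  then have f: "fst I \<subseteq> fst J" and s: "snd I \<subseteq> snd J" by (auto simp: less_eq_prod_def)
  have "T_op P I \<subseteq> T_op P J"
    unfolding T_op_def using true3_mono[OF f s] by blast
  moreover have "unfounded P J X" if "unfounded P I X" for X
    using that false3_mono[OF f s] unfolding unfounded_def by blast
  then have "greatest_unfounded P I \<subseteq> greatest_unfounded P J"
    unfolding greatest_unfounded_def by blast
  ultimately show "W_op P I \<le> W_op P J" by (simp add: W_op_def less_eq_prod_def)
qed

lemma W_fix: "fst (wf_model P) = T_op P (wf_model P)" "snd (wf_model P) = greatest_unfounded P (wf_model P)"
proof -
  have "wf_model P = W_op P (wf_model P)" unfolding wf_model_def by (rule lfp_unfold[OF mono_W])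
  then show "fst (wf_model P) = T_op P (wf_model P)" "snd (wf_model P) = greatest_unfounded P (wf_model P)"
    by (metis W_op_def fst_conv snd_conv)+
qed

lemma true3_2: "lit_true3 (Sm, - Sm) l = lit_true2 Sm l" by (cases l) auto

lemma W_sound: "fst (wf_model P) \<subseteq> Sm" "snd (wf_model P) \<subseteq> - Sm"
proof -
  have "W_op P (Sm, - Sm) \<le> (Sm, - Sm)"
  proof -
    have "T_op P (Sm, - Sm) \<subseteq> Sm"
      using Sm_model unfolding T_op_def is_model_def true3_2 by blast
    moreover have "X \<subseteq> - Sm" if X: "unfounded P (Sm, - Sm) X" for X
    proof
      fix a assume "a \<in> X"
      moreover have "a \<in> Sm \<Longrightarrow> a \<notin> X"
      proof (induction rule: Sm_induct)
        case (step a B)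
        show ?case
        proof
          assume "a \<in> X"
          then obtain l where l: "l \<in> set B" "lit_false3 (Sm, - Sm) l \<or> (\<exists>b. l = Pos b \<and> b \<in> X)"
            using X step(1) unfolding unfounded_def by blast
          have t: "lit_true2 Sm l" using step(2) l(1) by blast
          from l(2) show False
          proof
            assume "lit_false3 (Sm, - Sm) l" then show False using t by (cases l) auto
          next
            assume "\<exists>b. l = Pos b \<and> b \<in> X" then show False using step(3) l(1) by blast
          qed
        qed
      qed
      ultimately show "a \<in> - Sm" by blast
    qed
    then have "greatest_unfounded P (Sm, - Sm) \<subseteq> - Sm"
      unfolding greatest_unfounded_def by blast
    ultimately show ?thesis by (simp add: W_op_def less_eq_prod_def)
  qed
  then have "wf_model P \<le> (Sm, - Sm)" unfolding wf_model_def by (rule lfp_lowerbound)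
  then show "fst (wf_model P) \<subseteq> Sm" "snd (wf_model P) \<subseteq> - Sm" by (auto simp: less_eq_prod_def)
qed

lemma W_complete:
  "(\<forall>a\<in>Sm. lvl a \<le> k \<longrightarrow> a \<in> fst (wf_model P)) \<and> (\<forall>a\<in>base P - Sm. lvl a = k \<longrightarrow> a \<in> snd (wf_model P))"
proof (induction k rule: less_induct)
  case (less k)
  let ?W = "wf_model P"
  have pos: "\<forall>a\<in>Sm. lvl a \<le> k \<longrightarrow> a \<in> fst ?W"
  proof
    fix a assume "a \<in> Sm"
    then show "lvl a \<le> k \<longrightarrow> a \<in> fst ?W"
    proof (induction rule: Sm_induct)
      case (step a B)
      show ?case
      proof
        assume ak: "lvl a \<le> k"
        have "\<forall>l\<in>set B. lit_true3 ?W l"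
        proof
          fix l assume l: "l \<in> set B"
          show "lit_true3 ?W l"
          proof (cases l)
            case (Pos b)
            then have "lvl b \<le> k" using l Gr_props(2)[OF step(1)] ak by fastforce
            then show ?thesis using step(3)[of b] l Pos by auto
          next
            case (Neg b)
            then have g: "b \<in> base P \<and> lvl b < lvl a" using l Gr_props(3)[OF step(1)] by blast
            then have "b \<in> base P - Sm" "lvl b < k"
              using l step(2) ak Neg by auto
            then show ?thesis using less[of "lvl b"] Neg by auto
          next
            case (Eq s t) then show ?thesis using l step(2) by auto
          qed
        qed
        then show "a \<in> fst ?W" using step(1) W_fix(1) by (auto simp: T_op_def)
      qed
    qed
  qed
  define X where "X = {a \<in> base P - Sm. lvl a = k}"
  have key: "\<exists>l\<in>set B. lit_false3 ?W l \<or> (\<exists>b. l = Pos b \<and> b \<in> X)"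
    if a: "a \<in> X" and hB: "(h, B) \<in> Gr P" and "h = a" for a h B
  proof -
    have "\<not> (\<forall>l\<in>set B. lit_true2 Sm l)" using a hB \<open>h = a\<close> Sm_model X_def by (auto simp: is_model_def)
    then obtain l where l: "l \<in> set B" "\<not> lit_true2 Sm l" by blast
    have lh: "lvl h = k" using a \<open>h = a\<close> X_def by auto
    show "\<exists>l\<in>set B. lit_false3 ?W l \<or> (\<exists>b. l = Pos b \<and> b \<in> X)"
    proof (cases l)
      case (Pos b)
      then have b: "b \<in> base P" "b \<notin> Sm" "lvl b \<le> k" using l Gr_props(2)[OF hB] lh by auto
      show ?thesis
      proof (cases "lvl b = k")
        case True then show ?thesis using b Pos l X_def by auto
      next
        case False
        then have "b \<in> snd ?W" using less[of "lvl b"] b by auto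
        then have "lit_false3 ?W l" using Pos by simp
        then show ?thesis using l(1) by blast
      qed
    next
      case (Neg b)
      then have "Neg b \<in> set B" using l by simp
      then have "lvl b < lvl h" using Gr_props(3)[OF hB] by blast
      then have "b \<in> Sm" "lvl b \<le> k" using l Neg lh by auto
      then have "lit_false3 ?W l" using pos Neg by simp
      then show ?thesis using l(1) by blast
    next
      case (Eq s t) then have "lit_false3 ?W l" using l by simp
      then show ?thesis using l(1) by blast
    qed
  qed
  have "unfounded P ?W X" unfolding unfounded_def using key by (auto simp: X_def)
  then have "X \<subseteq> snd ?W" using W_fix(2) unfolding greatest_unfounded_def by blast
  then show ?case using pos X_def by auto
qed

lemma main: "(\<exists>!M. is_perfect P M) \<and> (\<forall>a\<in>base P. N_val P a = M_val P a)"
proof -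
  have ex: "\<exists>!M. is_perfect P M" using Sm_perfect perfect_unique by (rule ex1I)
  have pm: "perfect_model P = Sm" unfolding perfect_model_def
    using Sm_perfect perfect_unique by (rule the_equality)
  have "N_val P a = M_val P a" if a: "a \<in> base P" for a
  proof (cases "a \<in> Sm")
    case True
    then have "a \<in> fst (wf_model P)" using W_complete[of "lvl a"] by blast
    then show ?thesis using True by (simp add: N_val_def M_val_def pm)
  next
    case False
    then have "a \<in> base P - Sm" using a by blast
    then have "a \<in> snd (wf_model P)" using W_complete[of "lvl a"] by blast
    moreover have "a \<notin> fst (wf_model P)" using W_sound False by auto
    ultimately show ?thesis using False by (simp add: N_val_def M_val_def pm)
  qed
  then show ?thesis using ex by blast
qed

end

theorem corollary1:
  assumes "is_program P" and "stratified P"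
  shows "(\<exists>!M. is_perfect P M) \<and> (\<forall>a\<in>base P. N_val P a = M_val P a)"
proof -
  obtain st where "strat P st"
    using assms(2)[unfolded stratified_def] strat.intro[OF assms(1)] by blast
  then interpret s: strat P st .
  show ?thesis by (rule s.main)
qed

end
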